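(* Let $(D,\mathfrak m,\Bbbk)$ be a $d$-dimensional local domain with fraction field $\mathbb F$ and let $\nu:\mathbb F^\times\to\mathbb Z^d$ be a valuation OK relative to $D$, with residue field $\Bbbk_V$ and $S=\nu(D\setminus0)$. Then there exists $\mathbf u\in S$ such that \[\nu(M\setminus0)+\mathbf u\subseteq\nu^{(h)}(M)\subseteq\nu(M\setminus0)\] for every $D$-submodule $M$ of $\mathbb F$ and every integer $1\le h\le[\Bbbk_V:\Bbbk]$.
   Context: Fix $\mathbf a\in\mathbb R^d$ with $\mathbb Q$-linearly independent coordinates; order $\mathbb Z^d$ by $\mathbf u\le\mathbf v$ iff $\langle\mathbf u,\mathbf a\rangle\le\langle\mathbf v,\mathbf a\rangle$. A valuation on $\mathbb F$ with value group $\mathbb Z^d$ is a surjective homomorphism $\nu:\mathbb F^\times\to\mathbb Z^d$ with $\nu(x+y)\ge\min\{\nu(x),\nu(y)\}$ whenever $x,y,x+y\ne0$; $\mathbb F_{\ge\mathbf u}=\{0\}\cup\{x:\nu(x)\ge\mathbf u\}$, $\mathbb F_{>\mathbf u}$ similarly; $V=\mathbb F_{\ge\mathbf0}$, maximal ideal $\mathfrak m_V$, residue field $\Bbbk_V$. $\nu$ is OK relative to $D$ if (i) $D\subseteq V$, $\mathfrak m=\mathfrak m_V\cap D$; (ii) $\langle\mathbf u,\mathbf a\rangle>0$ for all nonzero $\mathbf u$ in the closed convex cone generated by $\nu(D\setminus 0)$; (iii) $[\Bbbk_V:\Bbbk]<\infty$; (iv) some $\mathbf v\in\mathbb Z^d$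 has $D\cap\mathbb F_{\ge n\mathbf v}\subseteq\mathfrak m^n$ for all $n\ge0$. For a $D$-submodule $M\subseteq\mathbb F$ and $1\le h\le[\Bbbk_V:\Bbbk]$, $\nu^{(h)}(M)$ is the set of $\mathbf u\in\mathbb Z^d$ with $\dim_\Bbbk\big((M\cap\mathbb F_{\ge\mathbf u})/(M\cap\mathbb F_{>\mathbf u})\big)\ge h$. *)

theory Defs
  imports "HOL-Analysis.Analysis"
begin

definition subring :: "'f::field set \<Rightarrow> bool" where
  "subring D \<longleftrightarrow> 0 \<in> D \<and> 1 \<in> D \<and> (\<forall>x\<in>D. \<forall>y\<in>D. x + y \<in> D \<and> x - y \<in> D \<and> x * y \<in> D)"

definition is_fraction_field_of :: "'f::field set \<Rightarrow> bool" where
  "is_fraction_field_of D \<longleftrightarrow> (\<forall>x::'f. \<exists>a\<in>D. \<exists>b\<in>D. b \<noteq> 0 \<and> x = a / b)"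

definition ideal_of :: "'f::field set \<Rightarrow> 'f set \<Rightarrow> bool" where
  "ideal_of D I \<longleftrightarrow> I \<subseteq> D \<and> 0 \<in> I \<and> (\<forall>x\<in>I. \<forall>y\<in>I. x + y \<in> I)
      \<and> (\<forall>r\<in>D. \<forall>x\<in>I. r * x \<in> I)"

definition ideal_gen :: "'f::field set \<Rightarrow> 'f set \<Rightarrow> 'f set" where
  "ideal_gen D S = \<Inter> {I. ideal_of D I \<and> S \<subseteq> I}"

definition maximal_ideal :: "'f::field set \<Rightarrow> 'f set \<Rightarrow> bool" where
  "maximal_ideal D I \<longleftrightarrow> ideal_of D I \<and> I \<noteq> D \<and>
      (\<forall>J. ideal_of D J \<and> I \<subseteq> J \<longrightarrow> J = I \<or> J = D)"

definition prime_ideal :: "'f::field set \<Rightarrow> 'f set \<Rightarrow> bool" where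
  "prime_ideal D P \<longleftrightarrow> ideal_of D P \<and> P \<noteq> D \<and>
      (\<forall>x\<in>D. \<forall>y\<in>D. x * y \<in> P \<longrightarrow> x \<in> P \<or> y \<in> P)"

definition noetherian :: "'f::field set \<Rightarrow> bool" where
  "noetherian D \<longleftrightarrow> (\<forall>I. ideal_of D I \<longrightarrow> (\<exists>G. finite G \<and> G \<subseteq> I \<and> ideal_gen D G = I))"

definition local_ring :: "'f::field set \<Rightarrow> bool" where
  "local_ring D \<longleftrightarrow> (\<exists>!I. maximal_ideal D I)"

definition krull_dim :: "'f::field set \<Rightarrow> enat" where
  "krull_dim D = Sup {enat n | n. \<exists>P::nat \<Rightarrow> 'f set.
      (\<forall>i\<le>n. prime_ideal D (P i)) \<and> (\<forall>i<n. P i \<subset> P (Suc i))}"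

fun ideal_pow :: "'f::field set \<Rightarrow> 'f set \<Rightarrow> nat \<Rightarrow> 'f set" where
  "ideal_pow D I 0 = D"
| "ideal_pow D I (Suc n) = ideal_gen D {x * y | x y. x \<in> ideal_pow D I n \<and> y \<in> I}"

definition submodule :: "'f::field set \<Rightarrow> 'f set \<Rightarrow> bool" where
  "submodule D M \<longleftrightarrow> 0 \<in> M \<and> (\<forall>x\<in>M. \<forall>y\<in>M. x + y \<in> M \<and> x - y \<in> M)
      \<and> (\<forall>r\<in>D. \<forall>x\<in>M. r * x \<in> M)"

definition lf :: "real^'d \<Rightarrow> int^'d \<Rightarrow> real" where
  "lf a u = (\<Sum>i\<in>UNIV. real_of_int (u $ i) * a $ i)"

definition rat_lin_indep :: "real^'d \<Rightarrow> bool" where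
  "rat_lin_indep a \<longleftrightarrow> (\<forall>c::'d \<Rightarrow> rat. (\<Sum>i\<in>UNIV. of_rat (c i) * a $ i) = 0 \<longrightarrow> (\<forall>i. c i = 0))"

definition valuation :: "real^'d \<Rightarrow> ('f::field \<Rightarrow> int^'d) \<Rightarrow> bool" where
  "valuation a \<nu> \<longleftrightarrow> \<nu> ` (UNIV - {0}) = UNIV
     \<and> (\<forall>x y. x \<noteq> 0 \<longrightarrow> y \<noteq> 0 \<longrightarrow> \<nu> (x * y) = \<nu> x + \<nu> y)
     \<and> (\<forall>x y. x \<noteq> 0 \<longrightarrow> y \<noteq> 0 \<longrightarrow> x + y \<noteq> 0 \<longrightarrow>
          min (lf a (\<nu> x)) (lf a (\<nu> y)) \<le> lf a (\<nu> (x + y)))"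

definition Fge :: "real^'d \<Rightarrow> ('f::field \<Rightarrow> int^'d) \<Rightarrow> int^'d \<Rightarrow> 'f set" where
  "Fge a \<nu> u = {x. x = 0 \<or> lf a u \<le> lf a (\<nu> x)}"

definition Fgt :: "real^'d \<Rightarrow> ('f::field \<Rightarrow> int^'d) \<Rightarrow> int^'d \<Rightarrow> 'f set" where
  "Fgt a \<nu> u = {x. x = 0 \<or> lf a u < lf a (\<nu> x)}"

text \<open>Dimension over the residue field k = D/m of P/N (for D-modules N \<subseteq> P with m P \<subseteq> N):
  supremum of the sizes of families in P whose images in P/N are k-linearly independent
  (scalars of k represented by lifts in D; a lift represents 0 in k iff it lies in m).\<close>
definition kdim :: "'f::field set \<Rightarrow> 'f set \<Rightarrow> 'f set \<Rightarrow> 'f set \<Rightarrow> enat" where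
  "kdim D m P N = Sup {enat n | n. \<exists>x::nat \<Rightarrow> 'f. (\<forall>i<n. x i \<in> P) \<and>
      (\<forall>c::nat \<Rightarrow> 'f. (\<forall>i<n. c i \<in> D) \<longrightarrow> (\<Sum>i<n. c i * x i) \<in> N \<longrightarrow> (\<forall>i<n. c i \<in> m))}"

text \<open>[k_V : k], where V = F_{\<ge>0}, m_V = F_{>0}.\<close>
definition res_deg :: "real^'d \<Rightarrow> ('f::field \<Rightarrow> int^'d) \<Rightarrow> 'f set \<Rightarrow> 'f set \<Rightarrow> enat" where
  "res_deg a \<nu> D m = kdim D m (Fge a \<nu> 0) (Fgt a \<nu> 0)"

definition nu_h :: "real^'d \<Rightarrow> ('f::field \<Rightarrow> int^'d) \<Rightarrow> 'f set \<Rightarrow> 'f set \<Rightarrow> nat \<Rightarrow> 'f set \<Rightarrow> (int^'d) set" where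
  "nu_h a \<nu> D m h M = {u. enat h \<le> kdim D m (M \<inter> Fge a \<nu> u) (M \<inter> Fgt a \<nu> u)}"

definition to_real :: "int^'d \<Rightarrow> real^'d" where
  "to_real u = (\<chi> i. real_of_int (u $ i))"

definition OK_valuation :: "real^'d \<Rightarrow> ('f::field \<Rightarrow> int^'d) \<Rightarrow> 'f set \<Rightarrow> 'f set \<Rightarrow> bool" where
  "OK_valuation a \<nu> D m \<longleftrightarrow>
     D \<subseteq> Fge a \<nu> 0 \<and> m = Fgt a \<nu> 0 \<inter> D
   \<and> (\<forall>u \<in> closure (convex_cone hull (to_real ` \<nu> ` (D - {0}))). u \<noteq> 0 \<longrightarrow> 0 < (\<Sum>i\<in>UNIV. u $ i * a $ i))
   \<and> res_deg a \<nu> D m < \<infinity>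
   \<and> (\<exists>v::int^'d. \<forall>n::nat. D \<inter> Fge a \<nu> (\<chi> i. int n * v $ i) \<subseteq> ideal_pow D m n)"

end

theory Submission
  imports Defs
begin

lemma lf_add: "lf a (u + v) = lf a u + lf a v"
  unfolding lf_def by (simp add: sum.distrib[symmetric] algebra_simps)

lemma lf_zero: "lf a 0 = 0"
  unfolding lf_def by simp

lemma lf_inj:
  assumes "rat_lin_indep a" "lf a u = lf a v"
  shows "u = v"
proof -
  have "(\<Sum>i\<in>UNIV. of_rat (of_int (u $ i - v $ i)) * a $ i) = lf a u - lf a v"
    unfolding lf_def by (simp add: sum_subtractf[symmetric] algebra_simps of_rat_diff of_rat_of_int_eq)
  then have "\<forall>i. (of_int (u $ i - v $ i) :: rat) = 0"
  proof -
    have "(\<Sum>i\<in>UNIV. of_rat (of_int (u $ i - v $ i)) * a $ i) = 0" using \<open>(\<Sum>i\<in>UNIV. of_rat (of_int (u $ i - v $ i)) * a $ i) = lf a u - lf a v\<close> assms(2) by simp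
    then show ?thesis using assms(1) unfolding rat_lin_indep_def
      by (drule_tac x="\<lambda>i. of_int (u $ i - v $ i)" in spec) blast
  qed
  then show ?thesis by (simp add: vec_eq_iff)
qed

lemma subring_prod:
  assumes "subring D" "finite I" "\<And>i. i \<in> I \<Longrightarrow> f i \<in> D"
  shows "prod f I \<in> D"
  using assms(2,3)
proof (induction I rule: finite_induct)
  case empty then show ?case using assms(1) by (simp add: subring_def)
next
  case (insert x F) then show ?case using assms(1) by (simp add: subring_def)
qed

lemma one_notin_max:
  assumes "maximal_ideal D m" "subring D"
  shows "1 \<notin> m"
proof
  assume "1 \<in> m"
  then have "D \<subseteq> m" using assms unfolding maximal_ideal_def ideal_of_def by (metis mult.right_neutral subsetI)
  then show False using assms unfolding maximal_ideal_def ideal_of_def by blast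
qed

lemma val_mult:
  assumes "valuation a \<nu>" "x \<noteq> 0" "y \<noteq> 0"
  shows "lf a (\<nu> (x * y)) = lf a (\<nu> x) + lf a (\<nu> y)"
  using assms unfolding valuation_def by (simp add: lf_add)

theorem mainTheorem11:
  fixes D m :: "'f::field set" and a :: "real^'d" and \<nu> :: "'f \<Rightarrow> int^'d"
  assumes "subring D" and "is_fraction_field_of D"
    and "noetherian D" and "local_ring D" and "maximal_ideal D m"
    and "krull_dim D = enat CARD('d)"
    and "rat_lin_indep a"
    and "valuation a \<nu>"
    and "OK_valuation a \<nu> D m"
  shows "\<exists>u \<in> \<nu> ` (D - {0}). \<forall>M h. submodule D M \<longrightarrow> 1 \<le> h \<longrightarrow> enat h \<le> res_deg a \<nu> D m \<longrightarrow>
           ((\<lambda>w. w + u) ` \<nu> ` (M - {0}) \<subseteq> nu_h a \<nu> D m h M \<and> nu_h a \<nu> D m h M \<subseteq> \<nu> ` (M - {0}))"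
proof -
  have sD: "subring D" by fact
  have one_m: "1 \<notin> m" using one_notin_max assms(1,5) by blast
  have oneD: "1 \<in> D" using sD by (simp add: subring_def)
  define P where "P = (\<lambda>n (x::nat \<Rightarrow> 'f). (\<forall>i<n. x i \<in> Fge a \<nu> 0) \<and>
      (\<forall>c::nat \<Rightarrow> 'f. (\<forall>i<n. c i \<in> D) \<longrightarrow> (\<Sum>i<n. c i * x i) \<in> Fgt a \<nu> 0 \<longrightarrow> (\<forall>i<n. c i \<in> m)))"
  define S where "S = {enat n | n. \<exists>x. P n x}"
  have rd: "res_deg a \<nu> D m = Sup S"
    unfolding res_deg_def kdim_def S_def P_def by simp
  have fin: "Sup S \<noteq> \<infinity>" using assms(9) rd unfolding OK_valuation_def by auto
  have ne: "S \<noteq> {}" unfolding S_def P_def by auto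
  have "finite S" using fin ne unfolding Sup_enat_def by (auto split: if_splits)
  then have "Sup S \<in> S" using ne unfolding Sup_enat_def by (simp add: Max_in)
  then obtain n0 \<theta> where n0: "Sup S = enat n0" and th: "P n0 \<theta>" unfolding S_def by auto
  have "\<forall>x. \<exists>p. fst p \<in> D \<and> snd p \<in> D \<and> snd p \<noteq> 0 \<and> x = fst p / snd p"
    using assms(2) unfolding is_fraction_field_of_def by force
  then obtain g where g: "\<And>x. fst (g x) \<in> D \<and> snd (g x) \<in> D \<and> snd (g x) \<noteq> 0 \<and> x = fst (g x) / snd (g x)"
    by metis
  define B where "B = (\<lambda>i. snd (g (\<theta> i)))"
  define A where "A = (\<lambda>i. fst (g (\<theta> i)))"
  define b where "b = (\<Prod>i<n0. B i)"
  have bD: "b \<in> D" unfolding b_def by (rule subring_prod[OF sD]) (auto simp: B_def g)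
  have bnz: "b \<noteq> 0" unfolding b_def B_def using g by auto
  have btD: "b * \<theta> i \<in> D" if "i < n0" for i
  proof -
    have "b = B i * (\<Prod>j\<in>{..<n0} - {i}. B j)" unfolding b_def
      using prod.remove[of "{..<n0}" i B] that by simp
    moreover have "B i * \<theta> i = A i"
    proof -
      have "\<theta> i = A i / B i" "B i \<noteq> 0" unfolding A_def B_def using g[of "\<theta> i"] by auto
      then show ?thesis by simp
    qed
    ultimately have "b * \<theta> i = A i * (\<Prod>j\<in>{..<n0} - {i}. B j)" by (simp add: algebra_simps)
    moreover have "A i \<in> D" unfolding A_def using g by auto
    moreover have "(\<Prod>j\<in>{..<n0} - {i}. B j) \<in> D" by (rule subring_prod[OF sD]) (auto simp: B_def g)
    ultimately show ?thesis using sD unfolding subring_def by auto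
  qed
  define u where "u = \<nu> b"
  show ?thesis
  proof (rule bexI[of _ u])
    show "u \<in> \<nu> ` (D - {0})" unfolding u_def using bD bnz by auto
    show "\<forall>M h. submodule D M \<longrightarrow> 1 \<le> h \<longrightarrow> enat h \<le> res_deg a \<nu> D m \<longrightarrow>
           ((\<lambda>w. w + u) ` \<nu> ` (M - {0}) \<subseteq> nu_h a \<nu> D m h M \<and> nu_h a \<nu> D m h M \<subseteq> \<nu> ` (M - {0}))"
    proof (intro allI impI conjI)
      fix M h
      assume sM: "submodule D M" and h1: "1 \<le> h" and hr: "enat h \<le> res_deg a \<nu> D m"
      show "(\<lambda>w. w + u) ` \<nu> ` (M - {0}) \<subseteq> nu_h a \<nu> D m h M"
      proof
        fix z assume "z \<in> (\<lambda>w. w + u) ` \<nu> ` (M - {0})"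
        then obtain x where xM: "x \<in> M" and xnz: "x \<noteq> 0" and z: "z = \<nu> x + u" by auto
        define y where "y = (\<lambda>i. b * \<theta> i * x)"
        have lfz: "lf a z = lf a (\<nu> x) + lf a (\<nu> b)" using z u_def lf_add by simp
        have yM: "y i \<in> M" if "i < n0" for i
          using sM btD[OF that] xM unfolding submodule_def y_def by auto
        have yF: "y i \<in> Fge a \<nu> z" if "i < n0" for i
        proof (cases "\<theta> i = 0")
          case True then show ?thesis unfolding y_def Fge_def by simp
        next
          case False
          have "0 \<le> lf a (\<nu> (\<theta> i))" using th that False unfolding P_def Fge_def by (auto simp: lf_zero)
          moreover have "lf a (\<nu> (y i)) = lf a (\<nu> b) + lf a (\<nu> (\<theta> i)) + lf a (\<nu> x)"
            unfolding y_def using val_mult[OF assms(8)] bnz xnz False by simp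
          ultimately show ?thesis using lfz unfolding Fge_def by auto
        qed
        have yind: "\<forall>i<n0. c i \<in> m" if cD: "\<forall>i<n0. c i \<in> D" and cs: "(\<Sum>i<n0. c i * y i) \<in> Fgt a \<nu> z" for c
        proof -
          define s where "s = (\<Sum>i<n0. c i * \<theta> i)"
          have eq: "(\<Sum>i<n0. c i * y i) = (b * x) * s" unfolding s_def y_def
            by (simp add: sum_distrib_left algebra_simps)
          have "s \<in> Fgt a \<nu> 0"
          proof (cases "s = 0")
            case True then show ?thesis unfolding Fgt_def by simp
          next
            case False
            have "lf a (\<nu> ((b * x) * s)) = lf a (\<nu> b) + lf a (\<nu> x) + lf a (\<nu> s)"
              using val_mult[OF assms(8)] bnz xnz False by simp
            moreover have "b * x * s \<noteq> 0" using bnz xnz False by simp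
            ultimately show ?thesis using cs eq lfz unfolding Fgt_def by (auto simp: lf_zero)
          qed
          then show ?thesis using th cD unfolding P_def s_def by blast
        qed
        have "enat n0 \<le> kdim D m (M \<inter> Fge a \<nu> z) (M \<inter> Fgt a \<nu> z)"
          unfolding kdim_def
          apply (rule Sup_upper)
          using yM yF yind by blast
        moreover have "enat h \<le> enat n0" using hr rd n0 by simp
        ultimately show "z \<in> nu_h a \<nu> D m h M" unfolding nu_h_def by (meson order_trans mem_Collect_eq)
      qed
      show "nu_h a \<nu> D m h M \<subseteq> \<nu> ` (M - {0})"
      proof
        fix w assume "w \<in> nu_h a \<nu> D m h M"
        then have hk: "enat h \<le> kdim D m (M \<inter> Fge a \<nu> w) (M \<inter> Fgt a \<nu> w)" unfolding nu_h_def by auto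
        define T where "T = {enat n | n. \<exists>x::nat \<Rightarrow> 'f. (\<forall>i<n. x i \<in> M \<inter> Fge a \<nu> w) \<and>
          (\<forall>c::nat \<Rightarrow> 'f. (\<forall>i<n. c i \<in> D) \<longrightarrow> (\<Sum>i<n. c i * x i) \<in> M \<inter> Fgt a \<nu> w \<longrightarrow> (\<forall>i<n. c i \<in> m))}"
        have "kdim D m (M \<inter> Fge a \<nu> w) (M \<inter> Fgt a \<nu> w) = Sup T" unfolding kdim_def T_def by simp
        have "\<exists>e\<in>T. 1 \<le> e"
        proof (rule ccontr)
          assume "\<not> ?thesis"
          have "\<forall>e\<in>T. e \<le> 0"
          proof
            fix e assume "e \<in> T"
            then have "\<not> 1 \<le> e" using \<open>\<not> (\<exists>e\<in>T. 1 \<le> e)\<close> by blast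
            then show "e \<le> 0" by (cases e) (auto simp: one_enat_def zero_enat_def)
          qed
          then have "Sup T \<le> 0" by (intro Sup_least) blast
          then have "enat h \<le> 0" using hk \<open>kdim D m (M \<inter> Fge a \<nu> w) (M \<inter> Fgt a \<nu> w) = Sup T\<close>
            by simp
          then show False using h1 by (simp add: zero_enat_def)
        qed
        then obtain n x where n1: "1 \<le> n" and xP: "\<forall>i<n. x i \<in> M \<inter> Fge a \<nu> w"
          and xi: "\<forall>c::nat \<Rightarrow> 'f. (\<forall>i<n. c i \<in> D) \<longrightarrow> (\<Sum>i<n. c i * x i) \<in> M \<inter> Fgt a \<nu> w \<longrightarrow> (\<forall>i<n. c i \<in> m)"
          unfolding T_def by (auto simp: one_enat_def)
        define c where "c = (\<lambda>i::nat. if i = 0 then (1::'f) else 0)"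
        have cD: "\<forall>i<n. c i \<in> D" using oneD sD unfolding c_def subring_def by auto
        have sum: "(\<Sum>i<n. c i * x i) = x 0"
        proof -
          have "(\<Sum>i<n. c i * x i) = (\<Sum>i<n. if i = 0 then x i else 0)"
            by (rule sum.cong) (auto simp: c_def)
          also have "\<dots> = x 0" using n1 by (subst sum.delta) auto
          finally show ?thesis .
        qed
        have x0: "x 0 \<in> M \<inter> Fge a \<nu> w" using xP n1 by auto
        have "x 0 \<notin> Fgt a \<nu> w"
        proof
          assume "x 0 \<in> Fgt a \<nu> w"
          then have "c 0 \<in> m" using xi cD sum x0 n1 by auto
          then show False using one_m unfolding c_def by simp
        qed
        then have "x 0 \<noteq> 0" "lf a w = lf a (\<nu> (x 0))" using x0 unfolding Fge_def Fgt_def by auto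
        then have "w = \<nu> (x 0)" using lf_inj[OF assms(7)] by metis
        then show "w \<in> \<nu> ` (M - {0})" using x0 \<open>x 0 \<noteq> 0\<close> by auto
      qed
    qed
  qed
qed

end
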